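(* Fix a nonempty partition $\lambda$. For $n>|\lambda|+\lambda_1$ let $N(n)$ be the number of standard Young tableaux of shape $\lambda[n]$, and let $G(n)$ be the number of those standard Young tableaux $T[n]$ of shape $\lambda[n]$ (where $T$ is the part below the top row, of shape $\lambda$) such that any two entries of $T$ differ by at least $2$ and $2$ and $n$ are not both entries of $T$. Then $\lim_{n\to\infty} G(n)/N(n)=1$.
   Context: For a partition $\lambda=(\lambda_1\ge\dots\ge\lambda_\ell)$ with $|\lambda|=\lambda_1+\dots+\lambda_\ell$, $\lambda[n]$ is the partition of $n$ obtained by adding a new largest part of size $n-|\lambda|$ (i.e. $(n-|\lambda|,\lambda_1,\dots,\lambda_\ell)$). For a tableau $T$ with distinct positive entries, $T[n]$ denotes the tableau obtained by placing above $T$ a top row consisting of all elements of $\{1,\dots,n\}$ not in $T$, in increasing order. A standard Young tableau with $n$ boxes has entries $1,\dots,n$ increasing along rows and down columns. *)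

theory Defs
  imports Complex_Main
begin

definition is_partition :: "nat list \<Rightarrow> bool" where
  "is_partition lam \<longleftrightarrow> sorted_wrt (\<ge>) lam \<and> (\<forall>x\<in>set lam. 0 < x)"

definition psize :: "nat list \<Rightarrow> nat" where
  "psize lam = sum_list lam"

definition pad :: "nat list \<Rightarrow> nat \<Rightarrow> nat list" where
  "pad lam n = (n - psize lam) # lam"

text \<open>Cells of the Young diagram (row i, column j), 0-indexed, row 0 on top.\<close>
definition diagram :: "nat list \<Rightarrow> (nat \<times> nat) set" where
  "diagram mu = {(i, j). i < length mu \<and> j < mu ! i}"

definition syt :: "nat list \<Rightarrow> (nat \<times> nat \<Rightarrow> nat) set" where
  "syt mu = {T. (\<forall>c. c \<notin> diagram mu \<longrightarrow> T c = 0)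
              \<and> bij_betw T (diagram mu) {1..sum_list mu}
              \<and> (\<forall>i j. (i, Suc j) \<in> diagram mu \<longrightarrow> T (i, j) < T (i, Suc j))
              \<and> (\<forall>i j. (Suc i, j) \<in> diagram mu \<longrightarrow> T (i, j) < T (Suc i, j))}"

definition lower_entries :: "nat list \<Rightarrow> (nat \<times> nat \<Rightarrow> nat) \<Rightarrow> nat set" where
  "lower_entries mu T' = T' ` {c \<in> diagram mu. 1 \<le> fst c}"

definition N_count :: "nat list \<Rightarrow> nat \<Rightarrow> nat" where
  "N_count lam n = card (syt (pad lam n))"

definition G_count :: "nat list \<Rightarrow> nat \<Rightarrow> nat" where
  "G_count lam n = card {T' \<in> syt (pad lam n).
      (\<forall>a\<in>lower_entries (pad lam n) T'. \<forall>b\<in>lower_entries (pad lam n) T'.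
          a \<noteq> b \<longrightarrow> a + 2 \<le> b \<or> b + 2 \<le> a)
    \<and> \<not> (2 \<in> lower_entries (pad lam n) T' \<and> n \<in> lower_entries (pad lam n) T')}"

end

theory Submission imports Defs "HOL-Library.FuncSet" "HOL-Library.Product_Lexorder" begin

definition Dl :: "nat list \<Rightarrow> (nat \<times> nat) set" where
  "Dl lam = {(i,j). 1 \<le> i \<and> i \<le> length lam \<and> j < lam!(i-1)}"

lemma lower_cells: "{c \<in> diagram (pad lam n). 1 \<le> fst c} = Dl lam"
  by (auto simp: diagram_def pad_def Dl_def nth_Cons')

lemma lower_entries_eq: "lower_entries (pad lam n) T = T ` Dl lam"
  unfolding lower_entries_def lower_cells ..

definition Top :: "nat list \<Rightarrow> nat \<Rightarrow> (nat \<times> nat) set" where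
  "Top lam n = {(0,j)|j. j < n - psize lam}"

lemma diagram_split: "diagram (pad lam n) = Top lam n \<union> Dl lam"
  by (auto simp: diagram_def pad_def Dl_def Top_def nth_Cons' split: if_splits)

lemma Top_Dl_disj: "Top lam n \<inter> Dl lam = {}"
  by (auto simp: Top_def Dl_def)

lemma Dl_image: "Dl lam = (\<lambda>(i,j). (Suc i, j)) ` (SIGMA i:{..<length lam}. {..<lam!i})"
  apply (auto simp: Dl_def image_iff)
  subgoal for a b by (rule bexI[where x="a - 1"]) auto
  done

lemma finite_Dl: "finite (Dl lam)"
  by (simp add: Dl_image)

lemma card_Dl: "card (Dl lam) = psize lam"
proof -
  have "inj_on (\<lambda>(i,j). (Suc i, j)) (SIGMA i:{..<length lam}. {..<lam!i})"
    by (auto simp: inj_on_def)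
  hence "card (Dl lam) = card (SIGMA i:{..<length lam}. {..<lam!i})"
    by (simp add: Dl_image card_image)
  also have "\<dots> = (\<Sum>i<length lam. lam!i)" by (simp add: card_SigmaI)
  also have "\<dots> = psize lam" by (simp add: psize_def sum_list_sum_nth lessThan_atLeast0)
  finally show ?thesis .
qed

lemma sum_pad: "psize lam \<le> n \<Longrightarrow> sum_list (pad lam n) = n"
  by (simp add: pad_def psize_def)


lemma syt_zero: "T \<in> syt mu \<Longrightarrow> c \<notin> diagram mu \<Longrightarrow> T c = 0"
  unfolding syt_def by blast


lemma syt_top_image:
  assumes "T \<in> syt (pad lam n)" "psize lam \<le> n"
  shows "T ` Top lam n = {1..n} - T ` Dl lam"
proof -
  have b: "bij_betw T (Top lam n \<union> Dl lam) {1..n}"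
    using assms by (simp add: syt_def diagram_split sum_pad)
  hence "T ` Top lam n \<union> T ` Dl lam = {1..n}" by (auto simp: bij_betw_def)
  moreover have "T ` Top lam n \<inter> T ` Dl lam = {}"
    using b Top_Dl_disj[of lam n] unfolding bij_betw_def
    by (metis image_empty inj_on_image_Int sup_ge1 sup_ge2)
  ultimately show ?thesis by blast
qed

lemma syt_top_mono:
  assumes "T \<in> syt (pad lam n)" "i < j" "j < n - psize lam"
  shows "T (0,i) < T (0,j)"
  using assms(2,3)
proof (induction j)
  case 0 then show ?case by simp
next
  case (Suc j)
  have "(0, Suc j) \<in> diagram (pad lam n)" using Suc.prems by (simp add: diagram_def pad_def)
  hence "T (0,j) < T (0, Suc j)" using assms(1) by (simp add: syt_def)
  then show ?case using Suc by (cases "i = j") auto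
qed

lemma syt_top_list:
  assumes "T \<in> syt (pad lam n)"
  shows "sorted (map (\<lambda>j. T (0,j)) [0..<n - psize lam]) \<and> distinct (map (\<lambda>j. T (0,j)) [0..<n - psize lam])
     \<and> set (map (\<lambda>j. T (0,j)) [0..<n - psize lam]) = T ` Top lam n"
proof -
  have "sorted_wrt (<) (map (\<lambda>j. T (0,j)) [0..<n - psize lam])"
    unfolding sorted_wrt_iff_nth_less using syt_top_mono[OF assms] by auto
  moreover have "set (map (\<lambda>j. T (0,j)) [0..<n - psize lam]) = T ` Top lam n"
    by (auto simp: Top_def)
  ultimately show ?thesis by (simp add: strict_sorted_iff)
qed

lemma syt_determined:
  assumes "T1 \<in> syt (pad lam n)" "T2 \<in> syt (pad lam n)" "psize lam \<le> n"
    and eq: "\<forall>c\<in>Dl lam. T1 c = T2 c"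
  shows "T1 = T2"
proof -
  have "T1 ` Dl lam = T2 ` Dl lam" using eq by (auto simp: image_iff)
  hence "T1 ` Top lam n = T2 ` Top lam n"
    using syt_top_image[OF assms(1,3)] syt_top_image[OF assms(2,3)] by simp
  hence L: "map (\<lambda>j. T1 (0,j)) [0..<n - psize lam] = map (\<lambda>j. T2 (0,j)) [0..<n - psize lam]"
    using syt_top_list[OF assms(1)] syt_top_list[OF assms(2)]
    by (intro sorted_distinct_set_unique) auto
  show ?thesis
  proof
    fix c :: "nat \<times> nat"
    obtain i j where c: "c = (i,j)" by fastforce
    show "T1 c = T2 c"
    proof (cases "c \<in> diagram (pad lam n)")
      case False then show ?thesis using assms(1,2) syt_zero by metis
    next
      case True
      then consider "c \<in> Top lam n" | "c \<in> Dl lam" by (auto simp: diagram_split)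
      then show ?thesis
      proof cases
        case 1
        then have "i = 0" "j < n - psize lam" by (auto simp: Top_def c)
        then show ?thesis using L c by (metis (no_types, lifting) length_map length_upt minus_nat.diff_0 nth_map nth_upt plus_nat.add_0)
      next
        case 2 then show ?thesis using eq by simp
      qed
    qed
  qed
qed


lemma card_det:
  assumes "finite D" "finite A" "c \<in> D" "P \<subseteq> PiE D (\<lambda>_. A)"
    and det: "\<And>f g. f \<in> P \<Longrightarrow> g \<in> P \<Longrightarrow> (\<forall>x\<in>D-{c}. f x = g x) \<Longrightarrow> f c = g c"
  shows "card P \<le> card A ^ (card D - 1)"
proof -
  have "inj_on (\<lambda>f. restrict f (D - {c})) P"
  proof (rule inj_onI)
    fix f g assume fg: "f \<in> P" "g \<in> P" "restrict f (D - {c}) = restrict g (D - {c})"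
    hence ag: "\<forall>x\<in>D-{c}. f x = g x" by (metis restrict_apply')
    show "f = g"
    proof
      fix x show "f x = g x"
      proof (cases "x \<in> D")
        case True then show ?thesis using ag det[OF fg(1,2) ag] by (cases "x = c") auto
      next
        case False then show ?thesis using fg(1,2) assms(4) by (metis PiE_arb subsetD)
      qed
    qed
  qed
  moreover have "(\<lambda>f. restrict f (D - {c})) ` P \<subseteq> PiE (D - {c}) (\<lambda>_. A)"
  proof (rule image_subsetI)
    fix f assume "f \<in> P"
    hence "f \<in> PiE D (\<lambda>_. A)" using assms(4) by blast
    thus "restrict f (D - {c}) \<in> PiE (D - {c}) (\<lambda>_. A)" by (auto simp: PiE_iff)
  qed
  moreover have "finite (PiE (D - {c}) (\<lambda>_. A))" using assms by (simp add: finite_PiE)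
  ultimately have "card P \<le> card (PiE (D - {c}) (\<lambda>_. A))" by (rule card_inj_on_le)
  also have "\<dots> = card A ^ (card D - 1)" using assms by (simp add: card_PiE)
  finally show ?thesis .
qed

definition good :: "nat list \<Rightarrow> nat \<Rightarrow> (nat \<times> nat \<Rightarrow> nat) \<Rightarrow> bool" where
  "good lam n T' \<longleftrightarrow> (\<forall>a\<in>lower_entries (pad lam n) T'. \<forall>b\<in>lower_entries (pad lam n) T'.
          a \<noteq> b \<longrightarrow> a + 2 \<le> b \<or> b + 2 \<le> a)
    \<and> \<not> (2 \<in> lower_entries (pad lam n) T' \<and> n \<in> lower_entries (pad lam n) T')"

definition Ubad :: "nat list \<Rightarrow> nat \<Rightarrow> ((nat \<times> nat) \<Rightarrow> nat) set" where
  "Ubad lam n = (\<Union>c1\<in>Dl lam. \<Union>c2\<in>Dl lam - {c1}. {f \<in> PiE (Dl lam) (\<lambda>_. {1..n}). f c2 = f c1 + 1})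
     \<union> (\<Union>c2\<in>Dl lam. {f \<in> PiE (Dl lam) (\<lambda>_. {1..n}). f c2 = n})"

lemma card_Ubad: "card (Ubad lam n) \<le> (psize lam * psize lam + psize lam) * n ^ (psize lam - 1)"
proof -
  let ?D = "Dl lam" and ?K = "psize lam" and ?B = "n ^ (psize lam - 1)"
  have fD: "finite ?D" by (rule finite_Dl)
  have cD: "card ?D = ?K" by (rule card_Dl)
  have b1: "card {f \<in> PiE ?D (\<lambda>_. {1..n}). f c2 = f c1 + 1} \<le> ?B" if "c1 \<in> ?D" "c2 \<in> ?D - {c1}" for c1 c2
    using card_det[OF fD _ _, of "{1..n}" c2 "{f \<in> PiE ?D (\<lambda>_. {1..n}). f c2 = f c1 + 1}"] that cD by auto
  have b2: "card {f \<in> PiE ?D (\<lambda>_. {1..n}). f c2 = n} \<le> ?B" if "c2 \<in> ?D" for c2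
    using card_det[OF fD _ _, of "{1..n}" c2 "{f \<in> PiE ?D (\<lambda>_. {1..n}). f c2 = n}"] that cD by auto
  have "card (\<Union>c2\<in>?D - {c1}. {f \<in> PiE ?D (\<lambda>_. {1..n}). f c2 = f c1 + 1}) \<le> ?K * ?B" if "c1 \<in> ?D" for c1
  proof -
    have "card (\<Union>c2\<in>?D - {c1}. {f \<in> PiE ?D (\<lambda>_. {1..n}). f c2 = f c1 + 1})
        \<le> (\<Sum>c2\<in>?D - {c1}. card {f \<in> PiE ?D (\<lambda>_. {1..n}). f c2 = f c1 + 1})"
      using fD by (intro card_UN_le) auto
    also have "\<dots> \<le> (\<Sum>c2\<in>?D - {c1}. ?B)" by (rule sum_mono) (use b1 that in auto)
    also have "\<dots> = card (?D - {c1}) * ?B" by simp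
    also have "\<dots> \<le> ?K * ?B" using cD fD by (intro mult_le_mono1) (simp add: card_Diff_subset_Int)
    finally show ?thesis .
  qed
  note bb = this
  have "card (\<Union>c1\<in>?D. \<Union>c2\<in>?D - {c1}. {f \<in> PiE ?D (\<lambda>_. {1..n}). f c2 = f c1 + 1})
     \<le> (\<Sum>c1\<in>?D. card (\<Union>c2\<in>?D - {c1}. {f \<in> PiE ?D (\<lambda>_. {1..n}). f c2 = f c1 + 1}))"
    by (rule card_UN_le[OF fD])
  also have "\<dots> \<le> (\<Sum>c1\<in>?D. ?K * ?B)" by (rule sum_mono) (use bb in auto)
  also have "\<dots> = card ?D * (?K * ?B)" by simp
  finally have u1: "card (\<Union>c1\<in>?D. \<Union>c2\<in>?D - {c1}. {f \<in> PiE ?D (\<lambda>_. {1..n}). f c2 = f c1 + 1}) \<le> ?K * (?K * ?B)"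
    using cD by simp
  have "card (\<Union>c2\<in>?D. {f \<in> PiE ?D (\<lambda>_. {1..n}). f c2 = n})
      \<le> (\<Sum>c2\<in>?D. card {f \<in> PiE ?D (\<lambda>_. {1..n}). f c2 = n})"
    by (rule card_UN_le[OF fD])
  also have "\<dots> \<le> (\<Sum>c2\<in>?D. ?B)" by (rule sum_mono) (use b2 in auto)
  also have "\<dots> = card ?D * ?B" by simp
  finally have u2: "card (\<Union>c2\<in>?D. {f \<in> PiE ?D (\<lambda>_. {1..n}). f c2 = n}) \<le> ?K * ?B"
    using cD by simp
  have "card (Ubad lam n) \<le> card (\<Union>c1\<in>?D. \<Union>c2\<in>?D - {c1}. {f \<in> PiE ?D (\<lambda>_. {1..n}). f c2 = f c1 + 1})
     + card (\<Union>c2\<in>?D. {f \<in> PiE ?D (\<lambda>_. {1..n}). f c2 = n})"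
    unfolding Ubad_def by (rule card_Un_le)
  hence "card (Ubad lam n) \<le> ?K * (?K * ?B) + ?K * ?B" using u1 u2 by linarith
  then show ?thesis by (simp add: algebra_simps)
qed

lemma bad_in_Ubad:
  assumes "T \<in> syt (pad lam n)" "psize lam \<le> n" "\<not> good lam n T"
  shows "restrict T (Dl lam) \<in> Ubad lam n"
proof -
  have b: "bij_betw T (Top lam n \<union> Dl lam) {1..n}"
    using assms by (simp add: syt_def diagram_split sum_pad)
  hence rng: "T ` Dl lam \<subseteq> {1..n}" by (auto simp: bij_betw_def)
  hence inP: "restrict T (Dl lam) \<in> PiE (Dl lam) (\<lambda>_. {1..n})" by auto
  from assms(3) consider (a) a b where "a \<in> T ` Dl lam" "b \<in> T ` Dl lam" "b = a + 1"
    | (b) "n \<in> T ` Dl lam"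
  proof -
    assume h1: "\<And>a b. a \<in> T ` Dl lam \<Longrightarrow> b \<in> T ` Dl lam \<Longrightarrow> b = a + 1 \<Longrightarrow> thesis"
      and h2: "n \<in> T ` Dl lam \<Longrightarrow> thesis"
    show thesis
    proof (cases "n \<in> T ` Dl lam")
      case True then show ?thesis by (rule h2)
    next
      case False
      with assms(3) obtain a b where "a \<in> T ` Dl lam" "b \<in> T ` Dl lam" "a \<noteq> b" "\<not> (a + 2 \<le> b \<or> b + 2 \<le> a)"
        unfolding good_def lower_entries_eq by blast
      moreover hence "b = a + 1 \<or> a = b + 1" by linarith
      ultimately show ?thesis using h1 by blast
    qed
  qed
  then show ?thesis
  proof cases
    case a
    then obtain c1 c2 where c: "c1 \<in> Dl lam" "c2 \<in> Dl lam" "T c1 = a" "T c2 = b" by auto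
    hence "c2 \<noteq> c1" using a by auto
    have "restrict T (Dl lam) \<in> {f \<in> PiE (Dl lam) (\<lambda>_. {1..n}). f c2 = f c1 + 1}"
      using c a inP by simp
    then show ?thesis unfolding Ubad_def using c \<open>c2 \<noteq> c1\<close> by blast
  next
    case b
    then obtain c2 where c: "c2 \<in> Dl lam" "T c2 = n" by auto
    have "restrict T (Dl lam) \<in> {f \<in> PiE (Dl lam) (\<lambda>_. {1..n}). f c2 = n}"
      using c inP by simp
    then show ?thesis unfolding Ubad_def using c by blast
  qed
qed


lemma rank_mono:
  fixes D :: "'a::linorder set"
  assumes "finite D" "c \<in> D" "d \<in> D" "c < d"
  shows "card {x\<in>D. x < c} < card {x\<in>D. x < d}"
proof (rule psubset_card_mono)
  show "finite {x\<in>D. x < d}" using assms(1) by simp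
  have "{x\<in>D. x < c} \<subseteq> {x\<in>D. x < d}" using assms(4) by auto
  moreover have "c \<notin> {x\<in>D. x < c}" by simp
  moreover have "c \<in> {x\<in>D. x < d}" using assms by auto
  ultimately show "{x\<in>D. x < c} \<subset> {x\<in>D. x < d}" by blast
qed

lemma rank_bij:
  fixes D :: "'a::linorder set"
  assumes "finite D"
  shows "bij_betw (\<lambda>c. card {x\<in>D. x < c}) D {..<card D}"
proof -
  let ?r = "\<lambda>c. card {x\<in>D. x < c}"
  have inj: "inj_on ?r D"
  proof (rule inj_onI)
    fix c d assume cd: "c \<in> D" "d \<in> D" "?r c = ?r d"
    show "c = d"
    proof (rule ccontr)
      assume "c \<noteq> d"
      hence "c < d \<or> d < c" by auto
      thus False
      proof
        assume "c < d" thus False using rank_mono[OF assms cd(1,2)] cd(3) by simp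
      next
        assume "d < c" thus False using rank_mono[OF assms cd(2,1)] cd(3) by simp
      qed
    qed
  qed
  have sub: "?r ` D \<subseteq> {..<card D}"
  proof
    fix y assume "y \<in> ?r ` D"
    then obtain c where c: "c \<in> D" "y = ?r c" by auto
    have "{x\<in>D. x < c} \<subset> D" using c by auto
    hence "card {x\<in>D. x < c} < card D" by (rule psubset_card_mono[OF assms])
    then show "y \<in> {..<card D}" using c by simp
  qed
  have "card (?r ` D) = card {..<card D}" using inj by (simp add: card_image)
  hence "?r ` D = {..<card D}" using sub by (intro card_subset_eq) simp_all
  thus ?thesis using inj by (simp add: bij_betw_def)
qed

lemma nth_le_K:
  fixes ys :: "nat list"
  assumes "sorted_wrt (<) ys" "{1..K} \<subseteq> set ys" "j < K" "j < length ys"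
  shows "ys ! j \<le> K"
proof (rule ccontr)
  assume "\<not> ys ! j \<le> K"
  have "{1..K} \<subseteq> (!) ys ` {..<j}"
  proof
    fix x assume x: "x \<in> {1..K}"
    have "x \<in> set ys" using assms(2) x by blast
    then obtain i where i: "i < length ys" "ys ! i = x" by (auto simp: in_set_conv_nth)
    have "i < j"
    proof (rule ccontr)
      assume "\<not> i < j"
      hence "j = i \<or> j < i" by auto
      hence "ys ! j \<le> ys ! i"
      proof
        assume "j < i" thus ?thesis using sorted_wrt_nth_less[OF assms(1), of j i] i(1) by simp
      qed simp
      moreover have "x \<le> K" using x by simp
      ultimately show False using i(2) \<open>\<not> ys ! j \<le> K\<close> by linarith
    qed
    thus "x \<in> (!) ys ` {..<j}" using i by auto
  qed
  hence "card {1..K} \<le> card ((!) ys ` {..<j})" by (intro card_mono) simp_all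
  also have "\<dots> \<le> j" using card_image_le[of "{..<j}" "(!) ys"] by simp
  finally show False using assms(3) by simp
qed

definition rk :: "nat list \<Rightarrow> nat \<times> nat \<Rightarrow> nat" where
  "rk lam c = card {x\<in>Dl lam. x < c}"

definition tab :: "nat list \<Rightarrow> nat \<Rightarrow> nat set \<Rightarrow> nat \<times> nat \<Rightarrow> nat" where
  "tab lam n S c = (if c \<in> diagram (pad lam n) then
      (if fst c = 0 then sorted_list_of_set ({1..n} - S) ! snd c else sorted_list_of_set S ! rk lam c)
    else 0)"

lemma rk_bij: "bij_betw (rk lam) (Dl lam) {..<psize lam}"
  using rank_bij[OF finite_Dl[of lam]] by (simp add: rk_def[abs_def] card_Dl)

lemma rk_mono: "c \<in> Dl lam \<Longrightarrow> d \<in> Dl lam \<Longrightarrow> c < d \<Longrightarrow> rk lam c < rk lam d"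
  unfolding rk_def by (rule rank_mono[OF finite_Dl])

lemma tab_props:
  assumes "2 * psize lam \<le> n" "S \<subseteq> {psize lam + 1..n}" "card S = psize lam"
  shows "tab lam n S \<in> syt (pad lam n)" "tab lam n S ` Dl lam = S"
proof -
  let ?K = "psize lam"
  define xs where "xs = sorted_list_of_set S"
  define ys where "ys = sorted_list_of_set ({1..n} - S)"
  have fS: "finite S" using assms(2) finite_subset by blast
  have xs: "sorted_wrt (<) xs" "length xs = ?K" "set xs = S" "distinct xs"
    using fS assms(3) by (auto simp: xs_def)
  have Ssub: "S \<subseteq> {1..n}" using assms(2) by auto
  have ys: "sorted_wrt (<) ys" "length ys = n - ?K" "set ys = {1..n} - S" "distinct ys"
    using Ssub assms(3) by (auto simp: ys_def card_Diff_subset fS)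
  have D_in: "c \<in> Dl lam \<Longrightarrow> c \<in> diagram (pad lam n)" for c by (simp add: diagram_split)
  have Dfst: "c \<in> Dl lam \<Longrightarrow> fst c \<noteq> 0" for c by (auto simp: Dl_def)
  have tabD: "tab lam n S c = xs ! rk lam c" if "c \<in> Dl lam" for c
    using that D_in[OF that] Dfst[OF that] by (simp add: tab_def xs_def)
  have tabT: "tab lam n S c = ys ! snd c" if "c \<in> Top lam n" for c
    using that by (auto simp: tab_def ys_def diagram_split Top_def)
  have bD: "bij_betw (tab lam n S) (Dl lam) S"
  proof -
    have "bij_betw (\<lambda>c. xs ! rk lam c) (Dl lam) S"
      using bij_betw_trans[OF rk_bij bij_betw_nth[of xs]] xs by (simp add: comp_def)
    thus ?thesis using bij_betw_cong[of "Dl lam" "tab lam n S" "\<lambda>c. xs ! rk lam c" S] tabD by simp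
  qed
  thus "tab lam n S ` Dl lam = S" by (simp add: bij_betw_def)
  have bT: "bij_betw (tab lam n S) (Top lam n) ({1..n} - S)"
  proof -
    have "bij_betw snd (Top lam n) {..<n - ?K}"
      unfolding bij_betw_def inj_on_def Top_def by (auto simp: image_iff)
    moreover have "bij_betw ((!) ys) {..<n - ?K} ({1..n} - S)"
      by (rule bij_betw_nth) (use ys in auto)
    ultimately have "bij_betw ((!) ys \<circ> snd) (Top lam n) ({1..n} - S)"
      by (rule bij_betw_trans)
    hence "bij_betw (\<lambda>c. ys ! snd c) (Top lam n) ({1..n} - S)"
      by (simp add: comp_def)
    thus ?thesis using bij_betw_cong[of "Top lam n" "tab lam n S" "\<lambda>c. ys ! snd c"] tabT by simp
  qed
  have bij: "bij_betw (tab lam n S) (diagram (pad lam n)) {1..sum_list (pad lam n)}"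
  proof -
    have "bij_betw (tab lam n S) (Top lam n \<union> Dl lam) (({1..n} - S) \<union> S)"
      by (rule bij_betw_combine[OF bT bD]) auto
    moreover have "({1..n} - S) \<union> S = {1..n}" using Ssub by auto
    ultimately show ?thesis using assms(1) by (simp add: diagram_split sum_pad)
  qed
  have valD: "tab lam n S c > ?K" if "c \<in> Dl lam" for c
  proof -
    have "tab lam n S c \<in> S" using bD that by (auto simp: bij_betw_def)
    thus ?thesis using assms(2) by auto
  qed
  have row: "tab lam n S (i, j) < tab lam n S (i, Suc j)" if "(i, Suc j) \<in> diagram (pad lam n)" for i j
  proof (cases "i = 0")
    case True
    hence "Suc j < length ys" using that ys(2) by (simp add: diagram_def pad_def)
    moreover have "(i, j) \<in> Top lam n" "(i, Suc j) \<in> Top lam n" using True that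
      by (auto simp: diagram_def pad_def Top_def)
    ultimately show ?thesis using tabT ys(1) by (simp add: sorted_wrt_nth_less)
  next
    case False
    hence D2: "(i, j) \<in> Dl lam" "(i, Suc j) \<in> Dl lam" using that
      by (auto simp: diagram_def pad_def Dl_def nth_Cons')
    hence "rk lam (i, j) < rk lam (i, Suc j)" by (intro rk_mono) auto
    moreover have "rk lam (i, Suc j) < length xs" using rk_bij D2 xs(2) by (auto simp: bij_betw_def)
    ultimately show ?thesis using tabD D2 xs(1) by (simp add: sorted_wrt_nth_less)
  qed
  have col: "tab lam n S (i, j) < tab lam n S (Suc i, j)" if "(Suc i, j) \<in> diagram (pad lam n)" for i j
  proof -
    have D2: "(Suc i, j) \<in> Dl lam" using that by (auto simp: diagram_def pad_def Dl_def)
    show ?thesis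
    proof (cases "(i, j) \<in> diagram (pad lam n)")
      case False then show ?thesis using valD[OF D2] by (simp add: tab_def)
    next
      case True
      show ?thesis
      proof (cases "i = 0")
        case True
        have "j < lam ! 0" using D2 True by (simp add: Dl_def)
        moreover have "lam ! 0 \<le> ?K" using D2 by (auto simp: Dl_def psize_def intro!: elem_le_sum_list)
        ultimately have "j < ?K" by simp
        moreover have "j < length ys" using \<open>(i,j) \<in> diagram (pad lam n)\<close> True ys(2)
          by (simp add: diagram_def pad_def)
        moreover have "{1..?K} \<subseteq> set ys" using ys(3) assms(1,2) by auto
        ultimately have "ys ! j \<le> ?K" using nth_le_K[OF ys(1)] by blast
        moreover have "(i,j) \<in> Top lam n" using \<open>(i,j) \<in> diagram (pad lam n)\<close> True
          by (auto simp: diagram_def pad_def Top_def)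
        ultimately show ?thesis using tabT valD[OF D2] by fastforce
      next
        case False
        hence D1: "(i, j) \<in> Dl lam" using True by (auto simp: diagram_split Top_def)
        hence "rk lam (i, j) < rk lam (Suc i, j)" using D2 by (intro rk_mono) auto
        moreover have "rk lam (Suc i, j) < length xs" using rk_bij D2 xs(2) by (auto simp: bij_betw_def)
        ultimately show ?thesis using tabD D1 D2 xs(1) by (simp add: sorted_wrt_nth_less)
      qed
    qed
  qed
  show "tab lam n S \<in> syt (pad lam n)"
    unfolding syt_def mem_Collect_eq
  proof (intro conjI allI impI)
    fix c assume "c \<notin> diagram (pad lam n)" thus "tab lam n S c = 0" by (simp add: tab_def)
  next
    show "bij_betw (tab lam n S) (diagram (pad lam n)) {1..sum_list (pad lam n)}" by (rule bij)
  next
    fix i j assume "(i, Suc j) \<in> diagram (pad lam n)"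
    thus "tab lam n S (i, j) < tab lam n S (i, Suc j)" by (rule row)
  next
    fix i j assume "(Suc i, j) \<in> diagram (pad lam n)"
    thus "tab lam n S (i, j) < tab lam n S (Suc i, j)" by (rule col)
  qed
qed


lemma syt_range: "T \<in> syt (pad lam n) \<Longrightarrow> psize lam \<le> n \<Longrightarrow> restrict T (Dl lam) \<in> PiE (Dl lam) (\<lambda>_. {1..n})"
proof -
  assume a: "T \<in> syt (pad lam n)" "psize lam \<le> n"
  have b: "bij_betw T (Top lam n \<union> Dl lam) {1..n}"
    using a by (simp add: syt_def diagram_split sum_pad)
  hence "T ` Dl lam \<subseteq> {1..n}" by (auto simp: bij_betw_def)
  thus ?thesis by auto
qed

lemma restrict_inj:
  assumes "psize lam \<le> n" shows "inj_on (\<lambda>T. restrict T (Dl lam)) (syt (pad lam n))"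
proof (rule inj_onI)
  fix T1 T2 assume h: "T1 \<in> syt (pad lam n)" "T2 \<in> syt (pad lam n)"
    "restrict T1 (Dl lam) = restrict T2 (Dl lam)"
  hence "\<forall>c\<in>Dl lam. T1 c = T2 c" by (metis restrict_apply')
  thus "T1 = T2" using syt_determined[OF h(1,2) assms] by blast
qed

lemma finite_syt:
  assumes "psize lam \<le> n" shows "finite (syt (pad lam n))"
proof (rule inj_on_finite[OF restrict_inj[OF assms]])
  show "(\<lambda>T. restrict T (Dl lam)) ` syt (pad lam n) \<subseteq> PiE (Dl lam) (\<lambda>_. {1..n})"
    using syt_range[OF _ assms] by blast
  show "finite (PiE (Dl lam) (\<lambda>_. {1..n}))" by (simp add: finite_PiE finite_Dl)
qed

lemma N_lower:
  assumes "2 * psize lam \<le> n"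
  shows "(n - psize lam) choose psize lam \<le> N_count lam n"
proof -
  let ?K = "psize lam"
  let ?F = "{S. S \<subseteq> {?K + 1..n} \<and> card S = ?K}"
  have "inj_on (tab lam n) ?F"
  proof (rule inj_onI)
    fix x y assume "x \<in> ?F" "y \<in> ?F" "tab lam n x = tab lam n y"
    then have x: "x \<subseteq> {?K + 1..n}" "card x = ?K" and y: "y \<subseteq> {?K + 1..n}" "card y = ?K"
      and e: "tab lam n x = tab lam n y" by simp_all
    have "x = tab lam n x ` Dl lam" using tab_props(2)[OF assms x] by simp
    also have "\<dots> = tab lam n y ` Dl lam" using e by simp
    also have "\<dots> = y" using tab_props(2)[OF assms y] by simp
    finally show "x = y" .
  qed
  moreover have "tab lam n ` ?F \<subseteq> syt (pad lam n)"
  proof (rule image_subsetI)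
    fix S assume "S \<in> ?F"
    hence "S \<subseteq> {?K + 1..n}" "card S = ?K" by simp_all
    thus "tab lam n S \<in> syt (pad lam n)" by (rule tab_props(1)[OF assms])
  qed
  moreover have "finite (syt (pad lam n))" using assms by (intro finite_syt) simp
  ultimately have "card ?F \<le> card (syt (pad lam n))" by (rule card_inj_on_le)
  moreover have "card ?F = card {?K + 1..n} choose ?K" by (rule n_subsets) simp
  moreover have "card {?K + 1..n} = n - ?K" by simp
  ultimately show ?thesis by (simp add: N_count_def)
qed

lemma bad_count:
  assumes "psize lam \<le> n"
  shows "card {T \<in> syt (pad lam n). \<not> good lam n T} \<le> (psize lam * psize lam + psize lam) * n ^ (psize lam - 1)"
proof -
  have "card {T \<in> syt (pad lam n). \<not> good lam n T} \<le> card (Ubad lam n)"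
  proof (rule card_inj_on_le)
    show "inj_on (\<lambda>T. restrict T (Dl lam)) {T \<in> syt (pad lam n). \<not> good lam n T}"
      using restrict_inj[OF assms] by (rule inj_on_subset) auto
    show "(\<lambda>T. restrict T (Dl lam)) ` {T \<in> syt (pad lam n). \<not> good lam n T} \<subseteq> Ubad lam n"
    proof (rule image_subsetI)
      fix T assume "T \<in> {T \<in> syt (pad lam n). \<not> good lam n T}"
      thus "restrict T (Dl lam) \<in> Ubad lam n" using bad_in_Ubad[of T lam n] assms by simp
    qed
    show "finite (Ubad lam n)"
    proof (rule finite_subset[of _ "PiE (Dl lam) (\<lambda>_. {1..n})"])
      show "Ubad lam n \<subseteq> PiE (Dl lam) (\<lambda>_. {1..n})" unfolding Ubad_def by blast
      show "finite (PiE (Dl lam) (\<lambda>_. {1..n}))" by (simp add: finite_PiE finite_Dl)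
    qed
  qed
  thus ?thesis using card_Ubad[of lam n] by linarith
qed

lemma N_split:
  assumes "psize lam \<le> n"
  shows "N_count lam n = G_count lam n + card {T \<in> syt (pad lam n). \<not> good lam n T}"
proof -
  have "syt (pad lam n) = {T \<in> syt (pad lam n). good lam n T} \<union> {T \<in> syt (pad lam n). \<not> good lam n T}"
    by auto
  hence "card (syt (pad lam n)) = card ({T \<in> syt (pad lam n). good lam n T} \<union> {T \<in> syt (pad lam n). \<not> good lam n T})"
    by simp
  also have "\<dots> = card {T \<in> syt (pad lam n). good lam n T} + card {T \<in> syt (pad lam n). \<not> good lam n T}"
    by (rule card_Un_disjoint) (use finite_syt[OF assms] in auto)
  finally have "card (syt (pad lam n)) = card {T \<in> syt (pad lam n). good lam n T} + card {T \<in> syt (pad lam n). \<not> good lam n T}" .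
  thus ?thesis by (simp add: N_count_def G_count_def good_def)
qed

lemma aux: "(n::real) > 0 \<Longrightarrow> a > 0 \<Longrightarrow> X > 0 \<Longrightarrow> M * a / (n * a / X) = M * X / n"
  by (simp add: field_simps)
lemma ratio_bound:
  fixes K M :: nat and N B n :: real
  assumes K: "K = Suc k" and n: "n > 0"
    and B: "0 \<le> B" "B \<le> M * n ^ k"
    and N: "(n / (2 * K)) ^ K \<le> N"
  shows "B / N \<le> M * (2 * K) ^ K / n"
proof -
  have p: "0 < (n / (2 * K)) ^ K" using n K by simp
  have "B / N \<le> (M * n ^ k) / (n / (2 * K)) ^ K"
    using B N p by (intro frac_le) auto
  also have "(n / (2 * K)) ^ K = n ^ K / (2 * K) ^ K"
    by (simp add: power_divide)
  also have "n ^ K = n * n ^ k" by (simp add: K)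
  also have "(M * n ^ k) / (n * n ^ k / (2 * K) ^ K) = M * (2 * K) ^ K / n"
    using aux[of n "n ^ k" "real ((2 * K) ^ K)" "real M"] n K by simp
  finally show ?thesis .
qed


theorem theorem3p2:
  fixes lam :: "nat list"
  assumes "is_partition lam" and "lam \<noteq> []"
  shows "(\<lambda>n. real (G_count lam n) / real (N_count lam n)) \<longlonglongrightarrow> 1"
proof -
  define K where "K = psize lam"
  have "0 < lam ! 0" using assms unfolding is_partition_def by auto
  moreover have "lam ! 0 \<le> K" unfolding K_def psize_def using assms(2) by (intro elem_le_sum_list) auto
  ultimately obtain k where K: "K = Suc k" by (cases K) auto
  define M where "M = K * K + K"
  define C where "C = real (M * (2 * K) ^ K)"
  have main: "1 - C / real n \<le> real (G_count lam n) / real (N_count lam n)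
      \<and> real (G_count lam n) / real (N_count lam n) \<le> 1" if n: "2 * K + 1 \<le> n" for n
  proof -
    let ?B = "card {T \<in> syt (pad lam n). \<not> good lam n T}"
    have Kn: "psize lam \<le> n" using n K_def by simp
    have split: "N_count lam n = G_count lam n + ?B" using N_split[OF Kn] .
    have "?B \<le> M * n ^ k" using bad_count[OF Kn] unfolding M_def K_def[symmetric] K by simp
    hence bB: "real ?B \<le> real M * real n ^ k"
      by (metis of_nat_le_iff of_nat_mult of_nat_power)
    have "2 * psize lam \<le> n" using n K_def by simp
    hence "real ((n - K) choose K) \<le> real (N_count lam n)" using N_lower[of lam n] K_def by simp
    moreover have "(real (n - K) / real K) ^ K \<le> real ((n - K) choose K)"
      using n by (intro binomial_ge_n_over_k_pow_k) simp
    moreover have "(real n / real (2 * K)) ^ K \<le> (real (n - K) / real K) ^ K"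
    proof (rule power_mono)
      have "real n / 2 \<le> real (n - K)" using n by simp
      hence "real n / 2 / real K \<le> real (n - K) / real K" by (rule divide_right_mono) simp
      moreover have "real n / real (2 * K) = real n / 2 / real K" by simp
      ultimately show "real n / real (2 * K) \<le> real (n - K) / real K" by simp
    qed (simp)
    ultimately have bN: "(real n / real (2 * K)) ^ K \<le> real (N_count lam n)" by linarith
    have npos: "real n > 0" using n by simp
    have "0 < (real n / real (2 * K)) ^ K" using npos K by simp
    hence Npos: "real (N_count lam n) > 0" using bN by linarith
    have r: "real ?B / real (N_count lam n) \<le> C / real n"
      unfolding C_def using ratio_bound[OF K npos _ bB] bN by simp
    have eq: "real (G_count lam n) / real (N_count lam n) = 1 - real ?B / real (N_count lam n)"
      using Npos split by (simp add: field_simps)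
    have nn: "0 \<le> real ?B / real (N_count lam n)" using Npos by simp
    show ?thesis using r eq nn by linarith
  qed
  show ?thesis
  proof (rule tendsto_sandwich[of "\<lambda>n. 1 - C / real n" _ _ "\<lambda>n. 1"])
    show "\<forall>\<^sub>F n in sequentially. 1 - C / real n \<le> real (G_count lam n) / real (N_count lam n)"
      using main unfolding eventually_sequentially by blast
    show "\<forall>\<^sub>F n in sequentially. real (G_count lam n) / real (N_count lam n) \<le> 1"
      using main unfolding eventually_sequentially by blast
    show "(\<lambda>n. 1 - C / real n) \<longlonglongrightarrow> 1"
      using tendsto_diff[OF tendsto_const[of "1::real"] lim_const_over_n[of C]] by simp
  qed simp
qed

end
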